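(* Let $A/B\ne 1/0$ be a convergent of $\theta$, and let $[c_0;c_1,\dots,c_m]$ be any finite continued fraction expansion of the rational number $A/B$ (with $c_0\ge1$ and $c_i\ge1$). Then $\lambda(|A-B\theta|)=c_0+c_1+\cdots+c_m$. Also $\lambda(|1-0\cdot\theta|)=0$.
   Context: Fix an irrational $\theta$ with $1<\theta<2$. Let $S(\theta)=\{i+j\theta : i,j\in\mathbb{N}_0\}$ and let $s_0<s_1<s_2<\cdots$ be its elements in increasing order. Put $\delta(n)=s_{n+1}-s_n$. Let $\lambda$ be the map from the set of values $\{\delta(n):n\ge0\}$ to $\mathbb{N}_0$ that numbers the distinct values in order of first occurrence: $\lambda(\delta(0))=0$, and the $m$-th distinct value to appear in the sequence $\delta(0),\delta(1),\dots$ (counting from $m=0$) receives label $m$. Write $\theta=[t_0;t_1,t_2,\dots]$ (so $t_0=1$) and define $a_{-2}=0,b_{-2}=1,a_{-1}=1,b_{-1}=0$, $a_k=t_ka_{k-1}+a_{k-2}$, $b_k=t_kb_{k-1}+b_{k-2}$ for $k\ge0$. The convergents of $\theta$ are the fraction $1/0$ together with all fractions $\frac{t a_k+a_{k-1}}{t b_k+b_{k-1}}$ with $k\ge -1$ and $1\le t\le t_{k+1}$. For every convergent $A/B$, the number $|A-B\theta|$ is one of the values $\delta(n)$. *)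

theory Defs
  imports Complex_Main
begin

definition S_set :: "real \<Rightarrow> real set" where
  "S_set \<theta> = {real i + real j * \<theta> | i j :: nat. True}"

definition s_seq :: "real \<Rightarrow> nat \<Rightarrow> real" where
  "s_seq \<theta> n = (THE x. x \<in> S_set \<theta> \<and> card {y \<in> S_set \<theta>. y < x} = n)"

definition delta :: "real \<Rightarrow> nat \<Rightarrow> real" where
  "delta \<theta> n = s_seq \<theta> (Suc n) - s_seq \<theta> n"

definition lam :: "real \<Rightarrow> real \<Rightarrow> nat" where
  "lam \<theta> d = card (delta \<theta> ` {..< (LEAST k. delta \<theta> k = d)})"

fun cf_rem :: "real \<Rightarrow> nat \<Rightarrow> real" where
  "cf_rem \<theta> 0 = \<theta>"
| "cf_rem \<theta> (Suc k) = 1 / (cf_rem \<theta> k - of_int \<lfloor>cf_rem \<theta> k\<rfloor>)"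

definition cf_t :: "real \<Rightarrow> nat \<Rightarrow> int" where
  "cf_t \<theta> k = \<lfloor>cf_rem \<theta> k\<rfloor>"

text \<open>Shifted indices: cf_a theta (k+2) = a_k, so cf_a theta 0 = a_{-2}, cf_a theta 1 = a_{-1}.\<close>
fun cf_a :: "real \<Rightarrow> nat \<Rightarrow> int" where
  "cf_a \<theta> 0 = 0"
| "cf_a \<theta> (Suc 0) = 1"
| "cf_a \<theta> (Suc (Suc k)) = cf_t \<theta> k * cf_a \<theta> (Suc k) + cf_a \<theta> k"

fun cf_b :: "real \<Rightarrow> nat \<Rightarrow> int" where
  "cf_b \<theta> 0 = 1"
| "cf_b \<theta> (Suc 0) = 0"
| "cf_b \<theta> (Suc (Suc k)) = cf_t \<theta> k * cf_b \<theta> (Suc k) + cf_b \<theta> k"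

text \<open>(A,B) is a convergent: either 1/0, or (t a_k + a_{k-1})/(t b_k + b_{k-1})
  with k >= -1 and 1 <= t <= t_{k+1}.  Here j = k+1.\<close>
definition is_convergent :: "real \<Rightarrow> int \<Rightarrow> int \<Rightarrow> bool" where
  "is_convergent \<theta> A B \<longleftrightarrow> (A = 1 \<and> B = 0) \<or>
     (\<exists>j t. 1 \<le> t \<and> t \<le> cf_t \<theta> j \<and>
        A = t * cf_a \<theta> (Suc j) + cf_a \<theta> j \<and>
        B = t * cf_b \<theta> (Suc j) + cf_b \<theta> j)"

fun cf_val :: "nat list \<Rightarrow> real" where
  "cf_val [] = 0"
| "cf_val [c] = real c"
| "cf_val (c # d # cs) = real c + 1 / cf_val (d # cs)"

end

theory Submission
  imports Defs
begin


definition val :: "real \<Rightarrow> int \<times> int \<Rightarrow> real" where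
  "val \<theta> V = real_of_int (fst V) - real_of_int (snd V) * \<theta>"

definition padd :: "int \<times> int \<Rightarrow> int \<times> int \<Rightarrow> int \<times> int" where
  "padd U W = (fst U + fst W, snd U + snd W)"

fun sb :: "real \<Rightarrow> nat \<Rightarrow> (int \<times> int) \<times> (int \<times> int)" where
  "sb \<theta> 0 = ((0,1),(1,0))"
| "sb \<theta> (Suc n) = (if - val \<theta> (fst (sb \<theta> n)) < val \<theta> (snd (sb \<theta> n))
      then (fst (sb \<theta> n), padd (fst (sb \<theta> n)) (snd (sb \<theta> n)))
      else (padd (fst (sb \<theta> n)) (snd (sb \<theta> n)), snd (sb \<theta> n)))"

lemma val_padd: "val \<theta> (padd U W) = val \<theta> U + val \<theta> W"
  by (simp add: val_def padd_def algebra_simps)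

lemma irr_val:
  assumes "\<theta> \<notin> \<rat>" and "(p,q) \<noteq> ((0::int),(0::int))"
  shows "val \<theta> (p,q) \<noteq> 0"
proof
  assume h: "val \<theta> (p,q) = 0"
  show False
  proof (cases "q = 0")
    case True
    then show False using h assms(2) by (simp add: val_def)
  next
    case False
    then have "\<theta> = of_int p / of_int q" using h by (simp add: val_def field_simps)
    then have "\<theta> \<in> \<rat>" by simp
    then show False using assms(1) by simp
  qed
qed

definition inv_st :: "real \<Rightarrow> (int \<times> int) \<times> (int \<times> int) \<Rightarrow> bool" where
  "inv_st \<theta> s = (case s of ((a,b),(c,d)) \<Rightarrow>
     0 \<le> a \<and> 1 \<le> b \<and> 1 \<le> c \<and> 0 \<le> d \<and> b*c = a*d + 1 \<and>
     val \<theta> (a,b) < 0 \<and> val \<theta> (c,d) > 0 \<and>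
     ((a = 0 \<and> b = 1 \<and> c = 1 \<and> d = 0) \<or> (- val \<theta> (a,b) \<le> 1 \<and> val \<theta> (c,d) \<le> 1)))"

lemma sb_inv:
  assumes irr: "\<theta> \<notin> \<rat>" and th1: "1 < \<theta>" and th2: "\<theta> < 2"
  shows "inv_st \<theta> (sb \<theta> n)"
proof (induction n)
  case 0
  then show ?case using th1 th2 by (simp add: inv_st_def val_def)
next
  case (Suc n)
  obtain a b c d where s: "sb \<theta> n = ((a,b),(c,d))" by (metis prod.exhaust)
  have I: "0 \<le> a" "1 \<le> b" "1 \<le> c" "0 \<le> d" "b*c = a*d + 1"
     "val \<theta> (a,b) < 0" "val \<theta> (c,d) > 0"
     "((a = 0 \<and> b = 1 \<and> c = 1 \<and> d = 0) \<or> (- val \<theta> (a,b) \<le> 1 \<and> val \<theta> (c,d) \<le> 1))"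
    using Suc s by (auto simp: inv_st_def)
  have nz: "val \<theta> (a+c, b+d) \<noteq> 0" using irr_val[OF irr, of "a+c" "b+d"] I by auto
  have vs: "val \<theta> (a+c, b+d) = val \<theta> (a,b) + val \<theta> (c,d)" by (simp add: val_def algebra_simps)
  show ?case
  proof (cases "- val \<theta> (a,b) < val \<theta> (c,d)")
    case True
    then have st: "sb \<theta> (Suc n) = ((a,b),(a+c,b+d))" using s by (simp add: padd_def)
    have "val \<theta> (a+c,b+d) > 0" using True vs by simp
    moreover have "b*(a+c) = a*(b+d) + 1" using I(5) by (simp add: algebra_simps)
    moreover have "- val \<theta> (a,b) \<le> 1 \<and> val \<theta> (a+c,b+d) \<le> 1"
      using I(8) True vs I(6) th1 by (auto simp: val_def)
    ultimately show ?thesis using st I by (simp add: inv_st_def)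
  next
    case False
    then have st: "sb \<theta> (Suc n) = ((a+c,b+d),(c,d))" using s by (simp add: padd_def)
    have "val \<theta> (a+c,b+d) < 0" using False vs nz by simp
    moreover have "(b+d)*c = (a+c)*d + 1" using I(5) by (simp add: algebra_simps)
    moreover have "- val \<theta> (a+c,b+d) \<le> 1 \<and> val \<theta> (c,d) \<le> 1"
      using I(8) False vs I(7) th2 by (auto simp: val_def)
    ultimately show ?thesis using st I by (simp add: inv_st_def)
  qed
qed



definition valid :: "nat list \<Rightarrow> bool" where
  "valid l \<longleftrightarrow> l \<noteq> [] \<and> (\<forall>c\<in>set l. 1 \<le> c)"

lemma cf_val_cons: "l \<noteq> [] \<Longrightarrow> cf_val (c # l) = real c + 1 / cf_val l"
  by (cases l) auto

lemma cf_val_ge1: "valid l \<Longrightarrow> cf_val l \<ge> 1 \<and> (cf_val l = 1 \<longrightarrow> l = [1])"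
proof (induction l)
  case Nil then show ?case by (simp add: valid_def)
next
  case (Cons c r)
  show ?case
  proof (cases "r = []")
    case True then show ?thesis using Cons.prems by (auto simp: valid_def)
  next
    case False
    then have vr: "valid r" using Cons.prems by (auto simp: valid_def)
    then have "cf_val r \<ge> 1" using Cons.IH by simp
    then have "1 / cf_val r > 0" by simp
    moreover have "real c \<ge> 1" using Cons.prems by (auto simp: valid_def)
    ultimately have "cf_val (c # r) > 1" using cf_val_cons[OF False, of c] by linarith
    then show ?thesis by simp
  qed
qed

lemma cf_val_split:
  assumes "valid (c # r)"
  shows "(r = [] \<and> cf_val (c#r) = real c) \<or> (r = [1] \<and> cf_val (c#r) = real c + 1) \<or>
     (valid r \<and> real c < cf_val (c#r) \<and> cf_val (c#r) < real c + 1 \<and> cf_val (c#r) = real c + 1 / cf_val r)"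
proof (cases "r = []")
  case True then show ?thesis by simp
next
  case False
  then have vr: "valid r" using assms by (auto simp: valid_def)
  note G = cf_val_ge1[OF vr]
  show ?thesis
  proof (cases "r = [1]")
    case True then show ?thesis by simp
  next
    case F2: False
    then have "cf_val r > 1" using G by auto
    then have "1 / cf_val r < 1" "1 / cf_val r > 0" by auto
    then show ?thesis using cf_val_cons[OF False, of c] vr by auto
  qed
qed

lemma cf_sum_unique:
  "valid cs \<Longrightarrow> valid cs' \<Longrightarrow> cf_val cs = cf_val cs' \<Longrightarrow> sum_list cs = sum_list cs'"
proof (induction cs arbitrary: cs')
  case Nil then show ?case by (simp add: valid_def)
next
  case (Cons c r)
  obtain c' r' where cs': "cs' = c' # r'" using Cons.prems(2) by (cases cs') (auto simp: valid_def)
  note A = cf_val_split[OF Cons.prems(1)]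
  note B = cf_val_split[OF Cons.prems(2)[unfolded cs']]
  have eq: "cf_val (c#r) = cf_val (c'#r')" using Cons.prems(3) cs' by simp
  have intA: "real (sum_list (c#r)) = cf_val (c#r)"
    if "(r = [] \<and> cf_val (c#r) = real c) \<or> (r = [1] \<and> cf_val (c#r) = real c + 1)"
    using that by auto
  have intB: "real (sum_list (c'#r')) = cf_val (c'#r')"
    if "(r' = [] \<and> cf_val (c'#r') = real c') \<or> (r' = [1] \<and> cf_val (c'#r') = real c' + 1)"
    using that by auto
  have nonint: "False" if "real c < x" "x < real c + 1" "x = real n" for c n x
  proof -
    have "c < n" using that by simp
    moreover have "n < c + 1" using that by (metis of_nat_1 of_nat_add of_nat_less_iff)
    ultimately show False by simp
  qed
  show ?case
  proof (cases "(r = [] \<and> cf_val (c#r) = real c) \<or> (r = [1] \<and> cf_val (c#r) = real c + 1)")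
    case True
    note iA = intA[OF True]
    show ?thesis
    proof (cases "(r' = [] \<and> cf_val (c'#r') = real c') \<or> (r' = [1] \<and> cf_val (c'#r') = real c' + 1)")
      case True
      then show ?thesis using iA intB eq cs' by (metis of_nat_eq_iff)
    next
      case False
      then have "real c' < cf_val (c'#r')" "cf_val (c'#r') < real c' + 1" using B by auto
      then show ?thesis using nonint iA eq by metis
    qed
  next
    case False
    then have a3: "valid r" "real c < cf_val (c#r)" "cf_val (c#r) < real c + 1"
      "cf_val (c#r) = real c + 1 / cf_val r" using A by auto
    show ?thesis
    proof (cases "(r' = [] \<and> cf_val (c'#r') = real c') \<or> (r' = [1] \<and> cf_val (c'#r') = real c' + 1)")
      case True
      then show ?thesis using nonint intB[OF True] eq a3 by metis
    next
      case F2: False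
      then have b3: "valid r'" "real c' < cf_val (c'#r')" "cf_val (c'#r') < real c' + 1"
        "cf_val (c'#r') = real c' + 1 / cf_val r'" using B by auto
      have "c = c'"
      proof -
        have "real c < real c' + 1" "real c' < real c + 1" using a3 b3 eq by linarith+
        then show ?thesis by linarith
      qed
      then have "1 / cf_val r = 1 / cf_val r'" using a3(4) b3(4) eq by simp
      then have "cf_val r = cf_val r'" by simp
      then have "sum_list r = sum_list r'" using Cons.IH a3(1) b3(1) by blast
      then show ?thesis using \<open>c = c'\<close> cs' by simp
    qed
  qed
qed

fun Mq :: "nat list \<Rightarrow> real \<times> real \<times> real \<times> real" where
  "Mq [] = (1,0,0,1)"
| "Mq (c # cs) = (case Mq cs of (p,q,r,s) \<Rightarrow> (real c * p + r, real c * q + s, p, q))"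

lemma Mq_snoc: "Mq (cs @ [c]) = (case Mq cs of (p,q,r,s) \<Rightarrow> (p * real c + q, p, r * real c + s, r))"
  by (induction cs) (auto split: prod.splits simp: algebra_simps)

lemma Mq_pos: "\<forall>c\<in>set cs. 1 \<le> c \<Longrightarrow> Mq cs = (p,q,r,s) \<Longrightarrow> p \<ge> 1 \<and> q \<ge> 0 \<and> r \<ge> 0 \<and> s \<ge> 0"
proof (induction cs arbitrary: p q r s)
  case Nil then show ?case by simp
next
  case (Cons c cs)
  obtain p' q' r' s' where m: "Mq cs = (p',q',r',s')" by (metis prod.exhaust)
  have "p' \<ge> 1 \<and> q' \<ge> 0 \<and> r' \<ge> 0 \<and> s' \<ge> 0" using Cons m by simp
  moreover have "real c \<ge> 1" using Cons.prems by simp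
  moreover have "p = real c * p' + r'" "q = real c * q' + s'" "r = p'" "s = q'" using Cons.prems m by auto
  ultimately show ?case
    by (smt (verit, best) mult_le_cancel_left1 mult_nonneg_nonneg)
qed

lemma cf_val_snoc:
  assumes "\<forall>c\<in>set cs. 1 \<le> c" "x \<ge> 1" "Mq cs = (p,q,r,s)"
  shows "cf_val (cs @ [x]) = (p * real x + q) / (r * real x + s)"
  using assms
proof (induction cs arbitrary: p q r s)
  case Nil then show ?case by simp
next
  case (Cons c cs)
  obtain p' q' r' s' where m: "Mq cs = (p',q',r',s')" by (metis prod.exhaust)
  have IH: "cf_val (cs @ [x]) = (p' * real x + q') / (r' * real x + s')" using Cons m by simp
  have pos: "p' \<ge> 1 \<and> q' \<ge> 0 \<and> r' \<ge> 0 \<and> s' \<ge> 0" using Mq_pos[OF _ m] Cons.prems by simp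
  have "p' * real x \<ge> 1" using pos Cons.prems(2) by (metis mult_mono' mult_1 of_nat_1 of_nat_le_iff zero_le_one)
  then have den: "p' * real x + q' > 0" using pos by simp
  have e: "p = real c * p' + r'" "q = real c * q' + s'" "r = p'" "s = q'" using Cons.prems m by auto
  have "cf_val ((c # cs) @ [x]) = real c + 1 / cf_val (cs @ [x])" using cf_val_cons[of "cs @ [x]" c] by simp
  also have "\<dots> = real c + (r' * real x + s') / (p' * real x + q')" using IH by simp
  also have "\<dots> = (p * real x + q) / (r * real x + s)" using den e by (simp add: field_simps)
  finally show ?case .
qed



lemma decomp:
  fixes a b c d p q :: int
  assumes "b*c = a*d + 1"
  shows "p = (q*c - p*d)*a + (p*b - q*a)*c" "q = (q*c - p*d)*b + (p*b - q*a)*d"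
    "val \<theta> (p,q) = of_int (q*c - p*d) * val \<theta> (a,b) + of_int (p*b - q*a) * val \<theta> (c,d)"
proof -
  have "(q*c - p*d)*a + (p*b - q*a)*c = p*(b*c - a*d)" by (simp add: algebra_simps)
  then show 1: "p = (q*c - p*d)*a + (p*b - q*a)*c" using assms by simp
  have "(q*c - p*d)*b + (p*b - q*a)*d = q*(b*c - a*d)" by (simp add: algebra_simps)
  then show 2: "q = (q*c - p*d)*b + (p*b - q*a)*d" using assms by simp
  have "val \<theta> (p,q) = val \<theta> ((q*c - p*d)*a + (p*b - q*a)*c, (q*c - p*d)*b + (p*b - q*a)*d)"
    using 1 2 by simp
  also have "\<dots> = of_int (q*c - p*d) * val \<theta> (a,b) + of_int (p*b - q*a) * val \<theta> (c,d)"
    by (simp add: val_def algebra_simps)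
  finally show "val \<theta> (p,q) = of_int (q*c - p*d) * val \<theta> (a,b) + of_int (p*b - q*a) * val \<theta> (c,d)" .
qed

lemma above_lemma:
  fixes a b c d p q :: int
  assumes "0 \<le> a" "1 \<le> b" "0 \<le> d" "b*c = a*d + 1"
    "0 \<le> p" "0 \<le> q" "val \<theta> (p,q) > 0" "q < b + d" "val \<theta> (a,b) < 0" "val \<theta> (c,d) > 0"
  shows "val \<theta> (p,q) \<ge> val \<theta> (c,d)"
proof -
  define \<alpha> where "\<alpha> = q*c - p*d"
  define \<beta> where "\<beta> = p*b - q*a"
  note D = decomp[where p=p and q=q, OF assms(4), folded \<alpha>_def \<beta>_def]
  have "real_of_int p > real_of_int q * \<theta>" using assms(7) by (simp add: val_def)
  then have "real_of_int p * of_int b \<ge> real_of_int q * \<theta> * of_int b"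
    using assms(2) by (intro mult_right_mono) auto
  moreover have "real_of_int q * \<theta> * of_int b \<ge> real_of_int q * of_int a"
  proof -
    have "\<theta> * of_int b \<ge> of_int a" using assms(9) by (simp add: val_def mult.commute)
    then show ?thesis using assms(6) by (metis mult.assoc mult_left_mono of_int_0_le_iff)
  qed
  ultimately have "of_int \<beta> \<ge> (0::real)" unfolding \<beta>_def by simp
  have b1: "\<beta> \<ge> 1"
  proof (rule ccontr)
    assume "\<not> 1 \<le> \<beta>"
    with \<open>of_int \<beta> \<ge> (0::real)\<close> have "\<beta> = 0" by linarith
    show False
    proof (cases "\<alpha> > 0")
      case True
      then have "of_int \<alpha> * val \<theta> (a,b) < 0" using assms(9) by (simp add: mult_pos_neg)
      then show False using assms(7) D(3) \<open>\<beta> = 0\<close> by simp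
    next
      case False
      then have "q \<le> 0" using D(2) \<open>\<beta> = 0\<close> assms(2) by (simp add: mult_nonpos_nonneg)
      then have "q = 0" using assms(6) by simp
      then have "p = 0" using D(1) D(2) \<open>\<beta> = 0\<close> assms(2) by simp
      then show False using \<open>q = 0\<close> assms(7) by (simp add: val_def)
    qed
  qed
  show ?thesis
  proof (cases "\<alpha> \<le> 0")
    case True
    have "of_int \<alpha> * val \<theta> (a,b) \<ge> 0" using True assms(9)
      by (simp add: mult_nonpos_nonpos)
    moreover have "of_int \<beta> * val \<theta> (c,d) \<ge> val \<theta> (c,d)"
      using b1 assms(10) by (simp add: mult_le_cancel_right1)
    ultimately show ?thesis using D(3) by simp
  next
    case False
    then have "\<alpha> \<ge> 1" by simp
    then have "\<alpha> * b \<ge> 1 * b" using assms(2) by (intro mult_right_mono) auto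
    moreover have "\<beta> * d \<ge> 1 * d" using b1 assms(3) by (intro mult_right_mono) auto
    ultimately have "q \<ge> b + d" using D(2) by simp
    then show ?thesis using assms(8) by simp
  qed
qed

lemma below_lemma:
  fixes a b c d p q :: int
  assumes "0 \<le> a" "1 \<le> c" "0 \<le> d" "b*c = a*d + 1"
    "0 \<le> p" "0 \<le> q" "val \<theta> (p,q) < 0" "p < a + c" "val \<theta> (a,b) < 0" "val \<theta> (c,d) > 0"
  shows "- val \<theta> (p,q) \<ge> - val \<theta> (a,b)"
proof -
  define \<alpha> where "\<alpha> = q*c - p*d"
  define \<beta> where "\<beta> = p*b - q*a"
  note D = decomp[where p=p and q=q, OF assms(4), folded \<alpha>_def \<beta>_def]
  have pq: "real_of_int p < real_of_int q * \<theta>" using assms(7) by (simp add: val_def)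
  have "real_of_int q * \<theta> > 0" using pq assms(5) by linarith
  then have "q \<noteq> 0" by auto
  then have "q > 0" using assms(6) by simp
  have "real_of_int p * of_int d \<le> real_of_int q * \<theta> * of_int d"
    using pq assms(3) by (intro mult_right_mono) auto
  then have "of_int \<alpha> \<ge> real_of_int q * (of_int c - \<theta> * of_int d)"
    unfolding \<alpha>_def by (simp add: algebra_simps)
  moreover have "real_of_int q * (of_int c - \<theta> * of_int d) > 0"
    using \<open>q > 0\<close> assms(10) by (simp add: val_def mult.commute)
  ultimately have "of_int \<alpha> > (0::real)" by linarith
  then have a1: "\<alpha> \<ge> 1" by simp
  show ?thesis
  proof (cases "\<beta> \<le> 0")
    case True
    have "of_int \<beta> * val \<theta> (c,d) \<le> 0" using True assms(10)
      by (simp add: mult_nonpos_nonneg)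
    moreover have "of_int \<alpha> * val \<theta> (a,b) \<le> val \<theta> (a,b)"
      using a1 assms(9) by (simp add: mult_le_cancel_right1)
    ultimately show ?thesis using D(3) by simp
  next
    case False
    then have "\<beta> \<ge> 1" by simp
    then have "\<beta> * c \<ge> 1 * c" using assms(2) by (intro mult_right_mono) auto
    moreover have "\<alpha> * a \<ge> 1 * a" using a1 assms(1) by (intro mult_right_mono) auto
    ultimately have "p \<ge> a + c" using D(1) by simp
    then show ?thesis using assms(8) by simp
  qed
qed



fun Vs :: "real \<Rightarrow> nat \<Rightarrow> int \<times> int" where
  "Vs \<theta> 0 = (1,0)"
| "Vs \<theta> (Suc n) = padd (fst (sb \<theta> n)) (snd (sb \<theta> n))"

definition pos :: "real \<Rightarrow> int \<times> int \<Rightarrow> real" where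
  "pos \<theta> V = min (real_of_int (fst V)) (real_of_int (snd V) * \<theta>)"

locale th =
  fixes \<theta> :: real
  assumes irr: "\<theta> \<notin> \<rat>" and th1: "1 < \<theta>" and th2: "\<theta> < 2"
begin

lemma inv: "inv_st \<theta> (sb \<theta> n)" using sb_inv[OF irr th1 th2] .

lemma invE:
  assumes "sb \<theta> n = ((a,b),(c,d))"
  shows "0 \<le> a \<and> 1 \<le> b \<and> 1 \<le> c \<and> 0 \<le> d \<and> b*c = a*d + 1 \<and>
     val \<theta> (a,b) < 0 \<and> val \<theta> (c,d) > 0 \<and>
     ((a = 0 \<and> b = 1 \<and> c = 1 \<and> d = 0) \<or> (- val \<theta> (a,b) \<le> 1 \<and> val \<theta> (c,d) \<le> 1))"
  using inv[of n] assms by (simp add: inv_st_def)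

lemma Vs_in_st: "Vs \<theta> n = fst (sb \<theta> n) \<or> Vs \<theta> n = snd (sb \<theta> n)"
  by (cases n) (auto simp: Let_def)

lemma W_in_Vs: "\<exists>k. snd (sb \<theta> n) = Vs \<theta> k"
proof (induction n)
  case 0 then show ?case by (intro exI[of _ 0]) simp
next
  case (Suc n) then show ?case by (auto intro: exI[of _ "Suc n"])
qed

lemma U_in_Vs: "fst (sb \<theta> n) = (0,1) \<or> (\<exists>k. fst (sb \<theta> n) = Vs \<theta> k)"
proof (induction n)
  case 0 then show ?case by simp
next
  case (Suc n) then show ?case by (auto intro: exI[of _ "Suc n"])
qed

lemma Vs_fst: "fst (Vs \<theta> n) \<ge> 1 \<and> snd (Vs \<theta> n) \<ge> 0"
proof (cases n)
  case 0 then show ?thesis by simp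
next
  case (Suc m)
  obtain a b c d where s: "sb \<theta> m = ((a,b),(c,d))" by (metis prod.exhaust)
  show ?thesis using invE[OF s] s Suc by (simp add: padd_def)
qed

lemma pos_mono_Suc: "pos \<theta> (Vs \<theta> n) < pos \<theta> (Vs \<theta> (Suc n))"
proof -
  obtain a b c d where s: "sb \<theta> n = ((a,b),(c,d))" by (metis prod.exhaust)
  note I = invE[OF s]
  have th0: "\<theta> > 0" using th1 by simp
  have p: "pos \<theta> (Vs \<theta> (Suc n)) = min (of_int a + of_int c) ((of_int b + of_int d) * \<theta>)"
    using s by (simp add: pos_def padd_def)
  have "real_of_int c > of_int d * \<theta>" using I by (simp add: val_def)
  have "real_of_int b * \<theta> > of_int a" using I by (simp add: val_def)
  have "real_of_int b * \<theta> > 0" using I th0 by simp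
  have "real_of_int d * \<theta> \<ge> 0" using I th0 by simp
  have lo: "pos \<theta> (Vs \<theta> n) \<le> of_int a \<or> pos \<theta> (Vs \<theta> n) \<le> of_int d * \<theta>"
    using Vs_in_st[of n] s by (auto simp: pos_def)
  show ?thesis using lo p I \<open>real_of_int c > of_int d * \<theta>\<close> \<open>real_of_int b * \<theta> > of_int a\<close>
    \<open>real_of_int b * \<theta> > 0\<close> \<open>real_of_int d * \<theta> \<ge> 0\<close>
    by (auto simp: algebra_simps)
qed

lemma pos_mono: "strict_mono (\<lambda>n. pos \<theta> (Vs \<theta> n))"
  using pos_mono_Suc by (simp add: strict_mono_Suc_iff)

lemma pos_less_iff: "pos \<theta> (Vs \<theta> k) < pos \<theta> (Vs \<theta> m) \<longleftrightarrow> k < m"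
  using strict_mono_less[OF pos_mono] by simp

lemma v_le1: "\<bar>val \<theta> (Vs \<theta> n)\<bar> \<le> 1"
proof -
  obtain a b c d where s: "sb \<theta> n = ((a,b),(c,d))" by (metis prod.exhaust)
  note I = invE[OF s]
  show ?thesis
  proof (cases "Vs \<theta> n = (a,b)")
    case True
    then have "a \<ge> 1" using Vs_fst[of n] by simp
    then show ?thesis using I True by auto
  next
    case False
    then have "Vs \<theta> n = (c,d)" using Vs_in_st[of n] s by auto
    then show ?thesis using I by (auto simp: val_def)
  qed
qed

definition Wstep :: "nat \<Rightarrow> bool" where
  "Wstep n \<longleftrightarrow> - val \<theta> (fst (sb \<theta> n)) < val \<theta> (snd (sb \<theta> n))"

lemma Wsteps_inf: "\<exists>K\<ge>N. Wstep K"
proof (rule ccontr)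
  assume "\<not> (\<exists>K\<ge>N. Wstep K)"
  then have nW: "\<And>K. K \<ge> N \<Longrightarrow> \<not> Wstep K" by auto
  have st: "snd (sb \<theta> (N+k)) = snd (sb \<theta> N) \<and>
     val \<theta> (fst (sb \<theta> (N+k))) = val \<theta> (fst (sb \<theta> N)) + real k * val \<theta> (snd (sb \<theta> N))" for k
  proof (induction k)
    case 0 then show ?case by simp
  next
    case (Suc k)
    have "\<not> Wstep (N+k)" using nW by simp
    then show ?case using Suc by (simp add: Wstep_def val_padd algebra_simps)
  qed
  obtain a b c d where s: "sb \<theta> N = ((a,b),(c,d))" by (metis prod.exhaust)
  note I = invE[OF s]
  obtain k where k: "- val \<theta> (a,b) < real k * val \<theta> (c,d)"
    using ex_less_of_nat_mult I by blast
  obtain a' b' c' d' where s': "sb \<theta> (N+k) = ((a',b'),(c',d'))" by (metis prod.exhaust)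
  have "val \<theta> (a',b') < 0" using invE[OF s'] by simp
  then show False using st[of k] s s' k by simp
qed

lemma Usteps_inf: "\<exists>K\<ge>N. \<not> Wstep K"
proof (rule ccontr)
  assume "\<not> (\<exists>K\<ge>N. \<not> Wstep K)"
  then have nW: "\<And>K. K \<ge> N \<Longrightarrow> Wstep K" by auto
  have st: "fst (sb \<theta> (N+k)) = fst (sb \<theta> N) \<and>
     val \<theta> (snd (sb \<theta> (N+k))) = val \<theta> (snd (sb \<theta> N)) + real k * val \<theta> (fst (sb \<theta> N))" for k
  proof (induction k)
    case 0 then show ?case by simp
  next
    case (Suc k)
    have "Wstep (N+k)" using nW by simp
    then show ?case using Suc by (simp add: Wstep_def val_padd algebra_simps)
  qed
  obtain a b c d where s: "sb \<theta> N = ((a,b),(c,d))" by (metis prod.exhaust)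
  note I = invE[OF s]
  obtain k where k: "val \<theta> (c,d) < real k * (- val \<theta> (a,b))"
    using ex_less_of_nat_mult[of "- val \<theta> (a,b)"] I by auto
  obtain a' b' c' d' where s': "sb \<theta> (N+k) = ((a',b'),(c',d'))" by (metis prod.exhaust)
  have "val \<theta> (c',d') > 0" using invE[OF s'] by simp
  then show False using st[of k] s s' k by simp
qed

definition dd where "dd n = snd (snd (sb \<theta> n))"
definition aa where "aa n = fst (fst (sb \<theta> n))"

lemma dd_Suc: "dd (Suc n) = (if Wstep n then dd n + snd (fst (sb \<theta> n)) else dd n)"
  by (simp add: dd_def Wstep_def padd_def)

lemma aa_Suc: "aa (Suc n) = (if Wstep n then aa n else aa n + fst (snd (sb \<theta> n)))"
  by (simp add: aa_def Wstep_def padd_def)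

lemma b_pos: "snd (fst (sb \<theta> n)) \<ge> 1"
  using invE[of n] by (metis prod.exhaust fst_conv snd_conv)

lemma c_pos: "fst (snd (sb \<theta> n)) \<ge> 1"
  using invE[of n] by (metis prod.exhaust fst_conv snd_conv)

lemma dd_mono: "mono dd"
unfolding mono_iff_le_Suc proof
  fix n show "dd n \<le> dd (Suc n)" using dd_Suc[of n] b_pos[of n] by auto
qed

lemma aa_mono: "mono aa"
unfolding mono_iff_le_Suc proof
  fix n show "aa n \<le> aa (Suc n)" using aa_Suc[of n] c_pos[of n] by auto
qed

lemma dd_unb: "\<exists>N. dd N \<ge> int n"
proof (induction n)
  case 0 then show ?case by (auto simp: dd_def intro: exI[of _ 0])
next
  case (Suc n)
  then obtain N where N: "dd N \<ge> int n" by blast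
  obtain K where K: "K \<ge> N" "Wstep K" using Wsteps_inf by blast
  have "dd K \<ge> dd N" using dd_mono K(1) by (simp add: mono_def)
  then have "dd (Suc K) \<ge> int (Suc n)" using dd_Suc[of K] K b_pos[of K] N by simp
  then show ?case by blast
qed

lemma aa_unb: "\<exists>N. aa N \<ge> int n"
proof (induction n)
  case 0 then show ?case by (auto simp: aa_def intro: exI[of _ 0])
next
  case (Suc n)
  then obtain N where N: "aa N \<ge> int n" by blast
  obtain K where K: "K \<ge> N" "\<not> Wstep K" using Usteps_inf by blast
  have "aa K \<ge> aa N" using aa_mono K(1) by (simp add: mono_def)
  then have "aa (Suc K) \<ge> int (Suc n)" using aa_Suc[of K] K c_pos[of K] N by simp
  then show ?case by blast
qed

lemma W_state: assumes "0 \<le> j" shows "\<exists>N. dd N \<le> j \<and> j < snd (fst (sb \<theta> N)) + dd N"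
proof -
  obtain N1 where "dd N1 \<ge> int (nat j + 1)" using dd_unb by blast
  then have ex: "\<exists>N. dd N > j" using assms by (intro exI[of _ N1]) simp
  define N0 where "N0 = (LEAST N. dd N > j)"
  have N0: "dd N0 > j" unfolding N0_def using LeastI_ex[OF ex] .
  have "N0 \<noteq> 0"
  proof
    assume "N0 = 0" then show False using N0 assms by (simp add: dd_def)
  qed
  then obtain N where NS: "N0 = Suc N" by (cases N0) auto
  have "\<not> dd N > j" using not_less_Least[of N "\<lambda>N. dd N > j"] NS N0_def by simp
  then have "dd N \<le> j" by simp
  moreover have "Wstep N" using dd_Suc[of N] N0 NS \<open>dd N \<le> j\<close> by (auto split: if_splits)
  ultimately show ?thesis using dd_Suc[of N] N0 NS by (intro exI[of _ N]) (simp add: add.commute)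
qed

lemma U_state: assumes "0 \<le> i" shows "\<exists>N. aa N \<le> i \<and> i < aa N + fst (snd (sb \<theta> N))"
proof -
  obtain N1 where "aa N1 \<ge> int (nat i + 1)" using aa_unb by blast
  then have ex: "\<exists>N. aa N > i" using assms by (intro exI[of _ N1]) simp
  define N0 where "N0 = (LEAST N. aa N > i)"
  have N0: "aa N0 > i" unfolding N0_def using LeastI_ex[OF ex] .
  have "N0 \<noteq> 0"
  proof
    assume "N0 = 0" then show False using N0 assms by (simp add: aa_def)
  qed
  then obtain N where NS: "N0 = Suc N" by (cases N0) auto
  have "\<not> aa N > i" using not_less_Least[of N "\<lambda>N. aa N > i"] NS N0_def by simp
  then have "aa N \<le> i" by simp
  moreover have "\<not> Wstep N" using aa_Suc[of N] N0 NS \<open>aa N \<le> i\<close> by (auto split: if_splits)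
  ultimately show ?thesis using aa_Suc[of N] N0 NS by (intro exI[of _ N]) simp
qed

end


context th begin

abbreviation S where "S \<equiv> S_set \<theta>"

lemma S_mem: "real i + real j * \<theta> \<in> S" unfolding S_set_def by blast

lemma S_mem_int: "0 \<le> a \<Longrightarrow> 0 \<le> b \<Longrightarrow> real_of_int a + real_of_int b * \<theta> \<in> S"
  using S_mem[of "nat a" "nat b"] by simp

lemma S_E: "y \<in> S \<Longrightarrow> (\<And>i j. y = real i + real j * \<theta> \<Longrightarrow> P) \<Longrightarrow> P"
  unfolding S_set_def by blast

lemma S_ge0: "y \<in> S \<Longrightarrow> y \<ge> 0"
  using th1 by (auto elim!: S_E)

lemma fin_below: "finite {y \<in> S. y < x}"
proof -
  let ?N = "nat \<lceil>x\<rceil>"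
  have "{y \<in> S. y < x} \<subseteq> (\<lambda>(i,j). real i + real j * \<theta>) ` ({..?N} \<times> {..?N})"
  proof
    fix y assume "y \<in> {y \<in> S. y < x}"
    then obtain i j where y: "y = real i + real j * \<theta>" "y < x" by (auto elim!: S_E)
    have "real j \<le> real j * \<theta>" using th1 mult_left_mono[of 1 \<theta> "real j"] by simp
    then have "real i < x" "real j < x" using y th1 by (auto intro: order.strict_trans1 simp: mult_nonneg_nonneg)
    then have "i \<le> ?N" "j \<le> ?N" by linarith+
    then show "y \<in> (\<lambda>(i,j). real i + real j * \<theta>) ` ({..?N} \<times> {..?N})" using y by force
  qed
  then show ?thesis by (rule finite_subset) auto
qed

definition cnt where "cnt x = card {y \<in> S. y < x}"

definition nx where "nx y = Min {z \<in> S. y < z \<and> z \<le> y + 1}"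

lemma S_plus1: "y \<in> S \<Longrightarrow> y + 1 \<in> S"
proof (erule S_E)
  fix i j assume "y = real i + real j * \<theta>"
  then show "y + 1 \<in> S" using S_mem[of "Suc i" j] by (simp add: algebra_simps)
qed

lemma nx_props:
  assumes "y \<in> S"
  shows "nx y \<in> S" "y < nx y" "nx y \<le> y + 1" "\<And>z. z \<in> S \<Longrightarrow> y < z \<Longrightarrow> nx y \<le> z"
proof -
  let ?A = "{z \<in> S. y < z \<and> z \<le> y + 1}"
  have fin: "finite ?A" using fin_below[of "y+2"] by (rule finite_subset[rotated]) auto
  have ne: "y + 1 \<in> ?A" using S_plus1[OF assms] by simp
  then have "?A \<noteq> {}" by blast
  have m: "nx y \<in> ?A" unfolding nx_def using Min_in[OF fin \<open>?A \<noteq> {}\<close>] .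
  then show "nx y \<in> S" "y < nx y" "nx y \<le> y + 1" by auto
  fix z assume z: "z \<in> S" "y < z"
  show "nx y \<le> z"
  proof (cases "z \<le> y + 1")
    case True
    then have "z \<in> ?A" using z by simp
    then show ?thesis unfolding nx_def using Min_le[OF fin] by blast
  next
    case False then show ?thesis using m by simp
  qed
qed

lemma cnt_mono: "x \<in> S \<Longrightarrow> x < x' \<Longrightarrow> cnt x < cnt x'"
  unfolding cnt_def
  by (rule psubset_card_mono[OF fin_below]) auto

lemma cnt_inj: "x \<in> S \<Longrightarrow> x' \<in> S \<Longrightarrow> cnt x = cnt x' \<Longrightarrow> x = x'"
  using cnt_mono by (metis less_irrefl linorder_neqE)

lemma cnt_less_iff: "x \<in> S \<Longrightarrow> x' \<in> S \<Longrightarrow> cnt x < cnt x' \<longleftrightarrow> x < x'"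
  using cnt_mono by (metis cnt_inj less_asym linorder_neqE)

lemma cnt_0: "cnt 0 = 0"
proof -
  have "{y\<in>S. y<0} = {}" using S_ge0 by force
  then show ?thesis unfolding cnt_def by (simp only: card.empty)
qed

lemma zero_S: "0 \<in> S" using S_mem[of 0 0] by simp

lemma cnt_nx: assumes "y \<in> S" shows "cnt (nx y) = Suc (cnt y)"
proof -
  have "{z \<in> S. z < nx y} = insert y {z \<in> S. z < y}"
    using nx_props[OF assms] assms by force
  then show ?thesis unfolding cnt_def using fin_below[of y] by simp
qed

lemma cnt_surj: "\<exists>x\<in>S. cnt x = n"
proof (induction n)
  case 0 then show ?case using zero_S cnt_0 by blast
next
  case (Suc n)
  then obtain x where "x \<in> S" "cnt x = n" by blast
  then show ?case using nx_props(1) cnt_nx by blast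
qed

lemma s_seq_props: "s_seq \<theta> n \<in> S \<and> cnt (s_seq \<theta> n) = n"
proof -
  obtain x where x: "x \<in> S" "cnt x = n" using cnt_surj by blast
  have "s_seq \<theta> n = x" unfolding s_seq_def
    apply (rule the_equality)
    using x cnt_inj unfolding cnt_def by auto
  then show ?thesis using x by simp
qed

lemma s_seq_cnt: "x \<in> S \<Longrightarrow> s_seq \<theta> (cnt x) = x"
  using s_seq_props[of "cnt x"] cnt_inj by blast

definition gap where "gap y = nx y - y"

lemma delta_gap: "delta \<theta> n = gap (s_seq \<theta> n)"
proof -
  have "s_seq \<theta> (Suc n) = nx (s_seq \<theta> n)"
    using s_seq_props[of n] s_seq_cnt[of "nx (s_seq \<theta> n)"] cnt_nx[of "s_seq \<theta> n"] nx_props(1)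
    by metis
  then show ?thesis by (simp add: delta_def gap_def)
qed

lemma gap_le: "y \<in> S \<Longrightarrow> z \<in> S \<Longrightarrow> y < z \<Longrightarrow> gap y \<le> z - y"
  using nx_props(4) by (simp add: gap_def)

lemma gap_le1: "y \<in> S \<Longrightarrow> gap y \<le> 1"
  using nx_props(3)[of y] by (simp add: gap_def)

lemma gap_cases:
  assumes y: "y = real i + real j * \<theta>"
  shows "gap y = 1 \<or>
    (\<exists>p q. 0 \<le> p \<and> 1 \<le> q \<and> q \<le> int j \<and> gap y = val \<theta> (p,q) \<and> val \<theta> (p,q) > 0) \<or>
    (\<exists>p q. 1 \<le> p \<and> p \<le> int i \<and> 0 \<le> q \<and> gap y = - val \<theta> (p,q) \<and> val \<theta> (p,q) < 0)"
proof -
  have yS: "y \<in> S" using y S_mem by simp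
  obtain i' j' where n: "nx y = real i' + real j' * \<theta>" using nx_props(1)[OF yS] by (auto elim!: S_E)
  define p where "p = int i' - int i"
  define q where "q = int j' - int j"
  have g: "gap y = of_int p + of_int q * \<theta>" unfolding gap_def p_def q_def n using y by (simp add: algebra_simps)
  have gpos: "gap y > 0" using nx_props(2)[OF yS] by (simp add: gap_def)
  have g1: "gap y \<le> 1" using gap_le1[OF yS] .
  show ?thesis
  proof (cases "q < 0")
    case True
    have "0 \<le> p"
    proof (rule ccontr)
      assume "\<not> 0 \<le> p"
      then have "of_int p + of_int q * \<theta> < 0" using True th1
        by (smt (verit) mult_less_0_iff of_int_less_0_iff)
      then show False using g gpos by simp
    qed
    moreover have "val \<theta> (p, -q) = gap y" using g by (simp add: val_def)
    ultimately show ?thesis using True gpos q_def by (intro disjI2 disjI1 exI[of _ p] exI[of _ "-q"]) auto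
  next
    case False
    show ?thesis
    proof (cases "p < 0")
      case True
      have "val \<theta> (-p, q) = - gap y" using g by (simp add: val_def)
      then show ?thesis using True False gpos p_def
        by (intro disjI2 disjI2 exI[of _ "-p"] exI[of _ q]) auto
    next
      case pF: False
      have "p + q \<ge> 1"
      proof (rule ccontr)
        assume "\<not> 1 \<le> p + q"
        then have "p = 0" "q = 0" using pF False by auto
        then show False using g gpos by simp
      qed
      have "real_of_int q * \<theta> \<ge> of_int q" using False th1 mult_left_mono[of 1 \<theta> "real_of_int q"] by simp
      then have "gap y \<ge> 1" using g \<open>p + q \<ge> 1\<close> by linarith
      then show ?thesis using g1 by simp
    qed
  qed
qed

end


context th begin

lemma pos_le_d: "pos \<theta> (c,d) \<le> real_of_int d * \<theta>" by (simp add: pos_def)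
lemma pos_le_a: "pos \<theta> (a,b) \<le> real_of_int a" by (simp add: pos_def)

lemma gap_char:
  assumes yS: "y \<in> S"
  shows "\<exists>k. gap y = \<bar>val \<theta> (Vs \<theta> k)\<bar> \<and> pos \<theta> (Vs \<theta> k) \<le> y"
proof -
  obtain i j where y: "y = real i + real j * \<theta>" using yS by (auto elim!: S_E)
  have th0: "\<theta> > 0" using th1 by simp
  from gap_cases[OF y] consider (A) "gap y = 1"
    | (B) p q where "0 \<le> p" "1 \<le> q" "q \<le> int j" "gap y = val \<theta> (p,q)" "val \<theta> (p,q) > 0"
    | (C) p q where "1 \<le> p" "p \<le> int i" "0 \<le> q" "gap y = - val \<theta> (p,q)" "val \<theta> (p,q) < 0"
    by blast
  then show ?thesis
  proof cases
    case A
    then show ?thesis using S_ge0[OF yS] by (intro exI[of _ 0]) (simp add: val_def pos_def)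
  next
    case B
    obtain N where N: "dd N \<le> int j" "int j < snd (fst (sb \<theta> N)) + dd N" using W_state[of "int j"] by auto
    obtain a b c d where s: "sb \<theta> N = ((a,b),(c,d))" by (metis prod.exhaust)
    note I = invE[OF s]
    have dj: "d \<le> int j" "int j < b + d" using N s by (auto simp: dd_def)
    have ge: "val \<theta> (p,q) \<ge> val \<theta> (c,d)"
      using above_lemma[of a b d c p q \<theta>] I B dj by auto
    have "y + val \<theta> (c,d) = of_int (int i + c) + of_int (int j - d) * \<theta>"
      using y by (simp add: val_def algebra_simps)
    moreover have "of_int (int i + c) + of_int (int j - d) * \<theta> \<in> S"
      using I dj by (intro S_mem_int) auto
    ultimately have "gap y \<le> val \<theta> (c,d)" using gap_le[OF yS, of "y + val \<theta> (c,d)"] I by simp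
    then have g: "gap y = val \<theta> (c,d)" using ge B by simp
    obtain k where k: "(c,d) = Vs \<theta> k" using W_in_Vs[of N] s by auto
    have "pos \<theta> (c,d) \<le> y"
    proof -
      have "real_of_int d * \<theta> \<le> real j * \<theta>" using dj th0 by simp
      moreover have "real j * \<theta> \<le> y" using y by simp
      ultimately show ?thesis using pos_le_d[of c d] by linarith
    qed
    then show ?thesis using g k I by (intro exI[of _ k]) auto
  next
    case C
    obtain N where N: "aa N \<le> int i" "int i < aa N + fst (snd (sb \<theta> N))" using U_state[of "int i"] by auto
    obtain a b c d where s: "sb \<theta> N = ((a,b),(c,d))" by (metis prod.exhaust)
    note I = invE[OF s]
    have ai: "a \<le> int i" "int i < a + c" using N s by (auto simp: aa_def)
    have ge: "- val \<theta> (p,q) \<ge> - val \<theta> (a,b)"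
      using below_lemma[of a c d b p q \<theta>] I C ai by auto
    have "y - val \<theta> (a,b) = of_int (int i - a) + of_int (int j + b) * \<theta>"
      using y by (simp add: val_def algebra_simps)
    moreover have "of_int (int i - a) + of_int (int j + b) * \<theta> \<in> S"
      using I ai by (intro S_mem_int) auto
    ultimately have "gap y \<le> - val \<theta> (a,b)" using gap_le[OF yS, of "y - val \<theta> (a,b)"] I by simp
    then have g: "gap y = - val \<theta> (a,b)" using ge C by simp
    have "(a,b) \<noteq> (0,1)"
    proof
      assume "(a,b) = (0,1)"
      then have "gap y = \<theta>" using g by (simp add: val_def)
      then show False using gap_le1[OF yS] th1 by simp
    qed
    then obtain k where k: "(a,b) = Vs \<theta> k" using U_in_Vs[of N] s by auto
    have "pos \<theta> (a,b) \<le> y"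
    proof -
      have "real_of_int a \<le> real i" using ai by simp
      moreover have "real i \<le> y" using y th0 by simp
      ultimately show ?thesis using pos_le_a[of a b] by linarith
    qed
    then show ?thesis using g k I by (intro exI[of _ k]) auto
  qed
qed

lemma pos_S: "pos \<theta> (Vs \<theta> m) \<in> S"
proof -
  obtain P Q where V: "Vs \<theta> m = (P,Q)" by (metis prod.exhaust)
  have "P \<ge> 1" "Q \<ge> 0" using Vs_fst[of m] V by auto
  then have "real_of_int P + of_int 0 * \<theta> \<in> S" "of_int 0 + real_of_int Q * \<theta> \<in> S"
    by (intro S_mem_int; simp)+
  then show ?thesis using V by (simp add: pos_def min_def)
qed

lemma gap_at_pos: "gap (pos \<theta> (Vs \<theta> m)) = \<bar>val \<theta> (Vs \<theta> m)\<bar>"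
proof -
  obtain a b c d where s: "sb \<theta> m = ((a,b),(c,d))" by (metis prod.exhaust)
  note I = invE[OF s]
  have yS: "pos \<theta> (Vs \<theta> m) \<in> S" using pos_S .
  have le1: "\<bar>val \<theta> (Vs \<theta> m)\<bar> \<le> 1" using v_le1 .
  have fst1: "fst (Vs \<theta> m) \<ge> 1" using Vs_fst[of m] by simp
  show ?thesis
  proof (cases "Vs \<theta> m = (c,d)")
    case True
    have posv: "pos \<theta> (Vs \<theta> m) = real (nat 0) + real (nat d) * \<theta>"
      using True I by (simp add: pos_def val_def min_def)
    let ?y = "pos \<theta> (Vs \<theta> m)"
    have "?y + val \<theta> (c,d) = of_int c + of_int 0 * \<theta>" using posv I by (simp add: val_def)
    moreover have "of_int c + of_int 0 * \<theta> \<in> S" using I by (intro S_mem_int) auto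
    ultimately have up: "gap ?y \<le> val \<theta> (c,d)" using gap_le[OF yS, of "?y + val \<theta> (c,d)"] I by simp
    from gap_cases[OF posv] consider (A) "gap ?y = 1"
      | (B) p q where "0 \<le> p" "1 \<le> q" "q \<le> int (nat d)" "gap ?y = val \<theta> (p,q)" "val \<theta> (p,q) > 0"
      | (C) p q where "1 \<le> p" "p \<le> int (nat 0)" "0 \<le> q" "gap ?y = - val \<theta> (p,q)" "val \<theta> (p,q) < 0"
      by blast
    then have "gap ?y \<ge> val \<theta> (c,d)"
    proof cases
      case A then show ?thesis using le1 True by simp
    next
      case B then show ?thesis using above_lemma[of a b d c p q \<theta>] I by auto
    next
      case C then show ?thesis by simp
    qed
    then show ?thesis using up True I by simp
  next
    case False
    then have True: "Vs \<theta> m = (a,b)" using Vs_in_st[of m] s by auto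
    have posv: "pos \<theta> (Vs \<theta> m) = real (nat a) + real (nat 0) * \<theta>"
      using True I by (simp add: pos_def val_def min_def)
    let ?y = "pos \<theta> (Vs \<theta> m)"
    have "?y - val \<theta> (a,b) = of_int 0 + of_int b * \<theta>" using posv I by (simp add: val_def)
    moreover have "of_int 0 + of_int b * \<theta> \<in> S" using I by (intro S_mem_int) auto
    ultimately have up: "gap ?y \<le> - val \<theta> (a,b)" using gap_le[OF yS, of "?y - val \<theta> (a,b)"] I by simp
    from gap_cases[OF posv] consider (A) "gap ?y = 1"
      | (B) p q where "0 \<le> p" "1 \<le> q" "q \<le> int (nat 0)" "gap ?y = val \<theta> (p,q)" "val \<theta> (p,q) > 0"
      | (C) p q where "1 \<le> p" "p \<le> int (nat a)" "0 \<le> q" "gap ?y = - val \<theta> (p,q)" "val \<theta> (p,q) < 0"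
      by blast
    then have "gap ?y \<ge> - val \<theta> (a,b)"
    proof cases
      case A then show ?thesis using le1 True I by simp
    next
      case B then show ?thesis by simp
    next
      case C then show ?thesis using below_lemma[of a c d b p q \<theta>] I by auto
    qed
    then show ?thesis using up True I by simp
  qed
qed

lemma val_inj:
  assumes "val \<theta> (p,q) = val \<theta> (p',q')" shows "p = p' \<and> q = q'"
proof -
  have "val \<theta> (p - p', q - q') = 0" using assms by (simp add: val_def algebra_simps)
  then have "(p - p', q - q') = (0,0)" using irr_val[OF irr] by blast
  then show ?thesis by simp
qed

lemma v_inj: assumes "\<bar>val \<theta> (Vs \<theta> k)\<bar> = \<bar>val \<theta> (Vs \<theta> m)\<bar>" shows "k = m"
proof -
  obtain p q where k: "Vs \<theta> k = (p,q)" by (metis prod.exhaust)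
  obtain p' q' where m: "Vs \<theta> m = (p',q')" by (metis prod.exhaust)
  have "p \<ge> 1" "p' \<ge> 1" using Vs_fst[of k] Vs_fst[of m] k m by auto
  consider "val \<theta> (p,q) = val \<theta> (p',q')" | "val \<theta> (p,q) = - val \<theta> (p',q')" using assms k m abs_eq_iff by force
  then have "Vs \<theta> k = Vs \<theta> m"
  proof cases
    case 1 then show ?thesis using val_inj k m by simp
  next
    case 2
    then have "val \<theta> (p + p', q + q') = 0" by (simp add: val_def algebra_simps)
    then have "(p + p', q + q') = (0,0)" using irr_val[OF irr] by blast
    then show ?thesis using \<open>p \<ge> 1\<close> \<open>p' \<ge> 1\<close> by simp
  qed
  then show ?thesis using pos_less_iff by (metis less_irrefl linorder_neqE)
qed

lemma lam_Vs: "lam \<theta> \<bar>val \<theta> (Vs \<theta> m)\<bar> = m"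
proof -
  define v where "v k = \<bar>val \<theta> (Vs \<theta> k)\<bar>" for k
  define P where "P k = pos \<theta> (Vs \<theta> k)" for k
  define K where "K = cnt (P m)"
  have PS: "P k \<in> S" for k unfolding P_def using pos_S .
  have sK: "s_seq \<theta> K = P m" unfolding K_def using s_seq_cnt[OF PS] .
  have dK: "delta \<theta> K = v m" using delta_gap sK gap_at_pos unfolding v_def P_def by simp
  have before: "\<exists>k'<m. delta \<theta> k = v k'" if "k < K" for k
  proof -
    have sk: "s_seq \<theta> k \<in> S" "cnt (s_seq \<theta> k) = k" using s_seq_props by auto
    have "s_seq \<theta> k < P m" using cnt_less_iff[OF sk(1) PS] sk that K_def by simp
    obtain k' where k': "gap (s_seq \<theta> k) = v k'" "P k' \<le> s_seq \<theta> k"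
      using gap_char[OF sk(1)] unfolding v_def P_def by blast
    have "P k' < P m" using k' \<open>s_seq \<theta> k < P m\<close> by simp
    then have "k' < m" using pos_less_iff unfolding P_def by simp
    then show ?thesis using k' delta_gap by auto
  qed
  have vinj: "v k = v m \<Longrightarrow> k = m" for k m using v_inj unfolding v_def .
  have L: "(LEAST k. delta \<theta> k = v m) = K"
  proof (rule Least_equality)
    show "delta \<theta> K = v m" using dK .
    fix k assume "delta \<theta> k = v m"
    show "K \<le> k"
    proof (rule ccontr)
      assume "\<not> K \<le> k"
      then have "k < K" by simp
      then obtain k' where "k' < m" "delta \<theta> k = v k'" using before by blast
      then show False using \<open>delta \<theta> k = v m\<close> vinj by force
    qed
  qed
  have img: "delta \<theta> ` {..<K} = v ` {..<m}"
  proof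
    show "delta \<theta> ` {..<K} \<subseteq> v ` {..<m}" using before by force
  next
    show "v ` {..<m} \<subseteq> delta \<theta> ` {..<K}"
    proof
      fix x assume "x \<in> v ` {..<m}"
      then obtain k' where k': "k' < m" "x = v k'" by auto
      have "P k' < P m" using k' pos_less_iff unfolding P_def by simp
      then have "cnt (P k') < K" using cnt_less_iff[OF PS PS] K_def by simp
      moreover have "delta \<theta> (cnt (P k')) = v k'"
        using delta_gap s_seq_cnt[OF PS] gap_at_pos unfolding v_def P_def by simp
      ultimately show "x \<in> delta \<theta> ` {..<K}" using k' by force
    qed
  qed
  have "inj_on v {..<m}" using vinj by (auto simp: inj_on_def)
  then have "card (v ` {..<m}) = m" by (simp add: card_image)
  then show ?thesis unfolding lam_def using L img v_def by simp
qed

end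


context th begin

definition D where "D k = val \<theta> (cf_a \<theta> k, cf_b \<theta> k)"

lemma D_rec: "D (Suc (Suc k)) = of_int (cf_t \<theta> k) * D (Suc k) + D k"
  by (simp add: D_def val_def algebra_simps)

lemma cfQ: "(even k \<longrightarrow> D k < 0 \<and> D (Suc k) > 0) \<and> (odd k \<longrightarrow> D k > 0 \<and> D (Suc k) < 0) \<and>
   cf_rem \<theta> k = \<bar>D k\<bar> / \<bar>D (Suc k)\<bar> \<and> cf_rem \<theta> k \<notin> \<rat> \<and> cf_rem \<theta> k > 1"
proof (induction k)
  case 0
  have "D 0 = - \<theta>" "D 1 = 1" by (simp_all add: D_def val_def)
  then show ?case using irr th1 by simp
next
  case (Suc k)
  define x where "x = cf_rem \<theta> k"
  define t where "t = cf_t \<theta> k"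
  define f where "f = x - of_int t"
  define e where "e = \<bar>D (Suc k)\<bar>"
  have t: "t = \<lfloor>x\<rfloor>" by (simp add: t_def x_def cf_t_def)
  have xirr: "x \<notin> \<rat>" using Suc unfolding x_def by blast
  have "x \<noteq> of_int t" using xirr by (metis Rats_of_int)
  then have f0: "f > 0" "f < 1" using t f_def by linarith+
  have e0: "e > 0" using Suc e_def by auto
  have Dk: "\<bar>D k\<bar> = x * e" using Suc e0 unfolding x_def e_def by simp
  have rs: "cf_rem \<theta> (Suc k) = 1 / f" by (simp add: f_def x_def cf_t_def t_def)
  have DD: "D (Suc (Suc k)) = of_int t * D (Suc k) + D k" using D_rec t_def by simp
  have irr2: "1 / f \<notin> \<rat>"
  proof
    assume "1 / f \<in> \<rat>"
    then have "1 / (1 / f) \<in> \<rat>" by (rule Rats_divide[OF Rats_1])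
    then have "f \<in> \<rat>" by simp
    then have "f + of_int t \<in> \<rat>" by (simp add: Rats_add)
    then show False using xirr f_def by simp
  qed
  have gt: "1 / f > 1" using f0 by simp
  show ?case
  proof (cases "even k")
    case True
    then have s: "D (Suc k) = e" "D k = - (x * e)" using Suc e_def Dk by auto
    have "D (Suc (Suc k)) = of_int t * e - x * e" using DD s by simp
    also have "\<dots> = - (f * e)" unfolding f_def by (simp add: algebra_simps)
    finally have "D (Suc (Suc k)) = - (f * e)" .
    moreover have "f * e > 0" using f0 e0 by simp
    ultimately show ?thesis unfolding rs using True s e0 irr2 gt f0 by (simp del: cf_rem.simps add: field_simps)
  next
    case False
    then have s: "D (Suc k) = - e" "D k = x * e" using Suc e_def Dk by auto
    have "D (Suc (Suc k)) = x * e - of_int t * e" using DD s by simp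
    also have "\<dots> = f * e" unfolding f_def by (simp add: algebra_simps)
    finally have "D (Suc (Suc k)) = f * e" .
    moreover have "f * e > 0" using f0 e0 by simp
    ultimately show ?thesis unfolding rs using False s e0 irr2 gt f0 by (simp del: cf_rem.simps add: field_simps)
  qed
qed

lemma cf_t_ge1: "cf_t \<theta> k \<ge> 1"
  using cfQ[of k] unfolding cf_t_def by linarith

lemma nat_cf_t_ge1: "1 \<le> nat (cf_t \<theta> k)"
  using cf_t_ge1[of k] by (simp add: le_nat_iff)

lemma rem_gt: assumes "real n < real_of_int (cf_t \<theta> k) + 1" shows "real n < cf_rem \<theta> k \<or> True"
  by simp

lemma less_rem: assumes "int n \<le> cf_t \<theta> k" shows "real n < cf_rem \<theta> k"
proof -
  have "real n \<le> cf_rem \<theta> k" using assms unfolding cf_t_def by linarith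
  moreover have "real n \<noteq> cf_rem \<theta> k" using cfQ[of k] by (metis Rats_of_nat)
  ultimately show ?thesis by simp
qed

definition Y where "Y j t = (cf_a \<theta> j + int t * cf_a \<theta> (Suc j), cf_b \<theta> j + int t * cf_b \<theta> (Suc j))"
definition X where "X j = (cf_a \<theta> j, cf_b \<theta> j)"
definition T where "T j = (\<Sum>i<j. nat (cf_t \<theta> i))"
definition st where "st j t = (if even j then (Y j t, X (Suc j)) else (X (Suc j), Y j t))"

lemma valY: "val \<theta> (Y j t) = D j + real t * D (Suc j)"
  by (simp add: Y_def D_def val_def algebra_simps)
lemma valX: "val \<theta> (X j) = D j" by (simp add: X_def D_def)

lemma padd_Y: "padd (Y j t) (X (Suc j)) = Y j (Suc t)" "padd (X (Suc j)) (Y j t) = Y j (Suc t)"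
  by (simp_all add: padd_def Y_def X_def algebra_simps)

lemma st_step:
  assumes "Suc t \<le> nat (cf_t \<theta> j)" "sb \<theta> (T j + t) = st j t"
  shows "sb \<theta> (Suc (T j + t)) = st j (Suc t)"
proof -
  define x where "x = cf_rem \<theta> j"
  define e where "e = \<bar>D (Suc j)\<bar>"
  have e0: "e > 0" using cfQ[of j] e_def by auto
  have Dj: "\<bar>D j\<bar> = x * e" using cfQ[of j] e0 unfolding x_def e_def by simp
  have "int (Suc t) \<le> cf_t \<theta> j" using assms(1) by simp
  then have xt: "real (Suc t) < x" using less_rem x_def by blast
  have key: "(x - real t) * e > e" using xt e0 by simp
  show ?thesis
  proof (cases "even j")
    case True
    then have s: "D (Suc j) = e" "D j = - (x * e)" using cfQ[of j] e_def Dj by auto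
    have "\<not> (- val \<theta> (Y j t) < val \<theta> (X (Suc j)))"
      using key s by (simp add: valY valX algebra_simps)
    then show ?thesis using assms(2) True by (simp add: st_def padd_Y)
  next
    case False
    then have s: "D (Suc j) = - e" "D j = x * e" using cfQ[of j] e_def Dj by auto
    have "- val \<theta> (X (Suc j)) < val \<theta> (Y j t)"
      using key s by (simp add: valY valX algebra_simps)
    then show ?thesis using assms(2) False by (simp add: st_def padd_Y)
  qed
qed

lemma corr: "t \<le> nat (cf_t \<theta> j) \<Longrightarrow> sb \<theta> (T j + t) = st j t"
proof (induction j arbitrary: t)
  case 0
  show ?case using 0
  proof (induction t)
    case 0 then show ?case by (simp add: T_def st_def Y_def X_def)
  next
    case (Suc t)
    then show ?case using st_step[of t 0] by simp
  qed
next
  case (Suc j)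
  have base: "sb \<theta> (T (Suc j)) = st (Suc j) 0"
  proof -
    have "T (Suc j) = T j + nat (cf_t \<theta> j)" by (simp add: T_def)
    then have "sb \<theta> (T (Suc j)) = st j (nat (cf_t \<theta> j))" using Suc.IH by simp
    moreover have "Y j (nat (cf_t \<theta> j)) = X (Suc (Suc j))" using cf_t_ge1[of j]
      by (simp add: Y_def X_def algebra_simps)
    moreover have "Y (Suc j) 0 = X (Suc j)" by (simp add: Y_def X_def)
    ultimately show ?thesis by (simp add: st_def)
  qed
  show ?case using Suc.prems
  proof (induction t)
    case 0 then show ?case using base by simp
  next
    case (Suc t)
    then show ?case using st_step[of t "Suc j"] by simp
  qed
qed

lemma Vs_Y: assumes "1 \<le> t" "t \<le> nat (cf_t \<theta> j)" shows "Vs \<theta> (T j + t) = Y j t"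
proof -
  obtain t' where t: "t = Suc t'" using assms(1) by (cases t) auto
  have "sb \<theta> (T j + t') = st j t'" using corr assms t by simp
  then show ?thesis using t by (auto simp: st_def padd_Y)
qed

lemma Mq_cf: "Mq (map (\<lambda>i. nat (cf_t \<theta> i)) [0..<j]) =
   (real_of_int (cf_a \<theta> (Suc j)), real_of_int (cf_a \<theta> j), real_of_int (cf_b \<theta> (Suc j)), real_of_int (cf_b \<theta> j))"
proof (induction j)
  case 0 then show ?case by simp
next
  case (Suc j)
  have "real (nat (cf_t \<theta> j)) = real_of_int (cf_t \<theta> j)" using cf_t_ge1[of j] by simp
  then show ?case using Suc by (simp add: Mq_snoc algebra_simps)
qed

lemma main_conv:
  assumes conv: "is_convergent \<theta> A B" and n10: "\<not> (A = 1 \<and> B = 0)"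
    and cs: "cs \<noteq> []" "\<forall>c \<in> set cs. 1 \<le> c"
    and cv: "cf_val cs = real_of_int A / real_of_int B"
  shows "lam \<theta> \<bar>real_of_int A - real_of_int B * \<theta>\<bar> = sum_list cs"
proof -
  obtain j t where jt: "1 \<le> t" "t \<le> cf_t \<theta> j" "A = t * cf_a \<theta> (Suc j) + cf_a \<theta> j"
      "B = t * cf_b \<theta> (Suc j) + cf_b \<theta> j"
    using conv n10 unfolding is_convergent_def by blast
  define n where "n = nat t"
  have n: "1 \<le> n" "n \<le> nat (cf_t \<theta> j)" "int n = t" using jt unfolding n_def by auto
  have AB: "(A,B) = Y j n" using jt n by (simp add: Y_def algebra_simps)
  have V: "Vs \<theta> (T j + n) = (A,B)" using Vs_Y[OF n(1) n(2)] AB by simp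
  have lamv: "lam \<theta> \<bar>real_of_int A - real_of_int B * \<theta>\<bar> = T j + n"
    using lam_Vs[of "T j + n"] V by (simp add: val_def)
  define cs0 where "cs0 = map (\<lambda>i. nat (cf_t \<theta> i)) [0..<j] @ [n]"
  have all0: "\<forall>c\<in>set (map (\<lambda>i. nat (cf_t \<theta> i)) [0..<j]). 1 \<le> c"
    using nat_cf_t_ge1 by auto
  have v0: "valid cs0" using all0 n unfolding cs0_def valid_def by auto
  have v1: "valid cs" using cs unfolding valid_def by simp
  have "cf_val cs0 = (real_of_int (cf_a \<theta> (Suc j)) * real n + real_of_int (cf_a \<theta> j)) /
        (real_of_int (cf_b \<theta> (Suc j)) * real n + real_of_int (cf_b \<theta> j))"
    unfolding cs0_def using cf_val_snoc[OF all0 n(1) Mq_cf] .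
  also have "\<dots> = real_of_int A / real_of_int B"
  proof -
    have "real_of_int A = real_of_int (cf_a \<theta> (Suc j)) * real n + real_of_int (cf_a \<theta> j)"
      using jt(3) n(3)[symmetric] by (simp add: algebra_simps)
    moreover have "real_of_int B = real_of_int (cf_b \<theta> (Suc j)) * real n + real_of_int (cf_b \<theta> j)"
      using jt(4) n(3)[symmetric] by (simp add: algebra_simps)
    ultimately show ?thesis by simp
  qed
  finally have "cf_val cs0 = cf_val cs" using cv by simp
  then have "sum_list cs = sum_list cs0" using cf_sum_unique[OF v1 v0] by simp
  also have "sum_list cs0 = T j + n"
    unfolding cs0_def T_def by (simp add: sum_list_map_eq_sum_count2 atLeast0LessThan[symmetric] sum_set_upt_conv_sum_list_nat[symmetric])
  finally show ?thesis using lamv by simp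
qed

end

theorem mainTheorem13:
  fixes \<theta> :: real
  assumes "\<theta> \<notin> \<rat>" and "1 < \<theta>" and "\<theta> < 2"
  shows "(\<forall>A B cs. is_convergent \<theta> A B \<and> \<not> (A = 1 \<and> B = 0) \<and>
             cs \<noteq> [] \<and> (\<forall>c \<in> set cs. 1 \<le> c) \<and>
             cf_val cs = real_of_int A / real_of_int B
           \<longrightarrow> lam \<theta> \<bar>real_of_int A - real_of_int B * \<theta>\<bar> = sum_list cs)
         \<and> lam \<theta> \<bar>1 - 0 * \<theta>\<bar> = 0"
proof -
  interpret th \<theta> using assms by unfold_locales
  have "lam \<theta> \<bar>val \<theta> (Vs \<theta> 0)\<bar> = 0" using lam_Vs[of 0] .
  then have "lam \<theta> \<bar>1 - 0 * \<theta>\<bar> = 0" by (simp add: val_def)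
  then show ?thesis using main_conv by blast
qed


end
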